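(* For all flow graphs $h_1,h_2$ over a flow monoid $\mathbb{M}$ with $h_1\#\#h_2$, one has $h_1.\mathit{flow}\uplus h_2.\mathit{flow}\ \ge\ (h_1\uplus h_2).\mathit{flow}$ pointwise on $X_1\uplus X_2$.
   Context: A flow monoid is a commutative monoid $(\mathbb{M},+,0)$ such that $n\le m :\iff \exists o.\ m=n+o$ is a partial order in which every ascending chain $K$ has a least upper bound $\bigsqcup K$, and $n+\bigsqcup K=\bigsqcup(n+K)$. $\mathcal{C}(\mathbb{M}\to\mathbb{M})$ is the set of functions commuting with least upper bounds of ascending chains. Infinite sums denote least upper bounds of finite partial sums. A flow graph is $h=(X,E,\mathit{in})$ with $X\subseteq\mathbb{N}$ finite, $E:X\times\mathbb{N}\to\mathcal{C}(\mathbb{M}\to\mathbb{M})$, $\mathit{in}:(\mathbb{N}\setminus X)\times X\to\mathbb{M}$; $\mathit{in}_x=\sum_{y\in\mathbb{N}\setminus X}\mathit{in}(y,x)$; the flow $h.\mathit{flow}$ is the least $\mathit{flow}:X\to\mathbb{M}$ with $\mathit{flow}(x)=\mathit{in}_x+\sum_{y\in X}E(y,x)(\mathit{flow}(y))$; the outflow is $h.\mathit{out}(x,y)=E(x,y)(h.\mathit{flow}(x))$ for $x\in X$, $y\notin X$. For $h_i=(X_i,E_i,\mathit{in}_i)$: $h_1\#\#h_2$ iff $X_1\cap X_2=\emptyset$ and for all $x\in X_1,y\in X_2$, $h_1.\mathit{out}(x,y)=\mathit{in}_2(x,y)$ and $h_2.\mathit{out}(y,x)=\mathit{in}_1(y,x)$;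 and $h_1\uplus h_2=(X_1\uplus X_2,E_1\uplus E_2,(\mathit{in}_1\uplus\mathit{in}_2)|_{(\mathbb{N}\setminus(X_1\uplus X_2))\times(X_1\uplus X_2)})$. *)

theory Defs
  imports Main
begin

definition leM :: "'m::comm_monoid_add \<Rightarrow> 'm \<Rightarrow> bool" where
  "leM n m \<longleftrightarrow> (\<exists>d. m = n + d)"

definition is_lubM :: "'m::comm_monoid_add set \<Rightarrow> 'm \<Rightarrow> bool" where
  "is_lubM K u \<longleftrightarrow> (\<forall>k\<in>K. leM k u) \<and> (\<forall>v. (\<forall>k\<in>K. leM k v) \<longrightarrow> leM u v)"

definition lubM :: "'m::comm_monoid_add set \<Rightarrow> 'm" where
  "lubM K = (THE u. is_lubM K u)"

definition chainM :: "'m::comm_monoid_add set \<Rightarrow> bool" where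
  "chainM K \<longleftrightarrow> K \<noteq> {} \<and> (\<forall>a\<in>K. \<forall>b\<in>K. leM a b \<or> leM b a)"

definition flow_monoid :: "'m::comm_monoid_add itself \<Rightarrow> bool" where
  "flow_monoid _ \<longleftrightarrow>
     (\<forall>a b::'m. leM a b \<longrightarrow> leM b a \<longrightarrow> a = b) \<and>
     (\<forall>K::'m set. chainM K \<longrightarrow> (\<exists>u. is_lubM K u)) \<and>
     (\<forall>(n::'m) K. chainM K \<longrightarrow> n + lubM K = lubM ((\<lambda>k. n + k) ` K))"

definition continuousM :: "('m::comm_monoid_add \<Rightarrow> 'm) \<Rightarrow> bool" where
  "continuousM f \<longleftrightarrow> (\<forall>K. chainM K \<longrightarrow> is_lubM (f ` K) (f (lubM K)))"

definition infsumM :: "(nat \<Rightarrow> 'm::comm_monoid_add) \<Rightarrow> nat set \<Rightarrow> 'm" where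
  "infsumM f A = lubM (range (\<lambda>n. sum f (A \<inter> {..<n})))"

record 'm fgraph =
  nodes :: "nat set"
  edge  :: "nat \<Rightarrow> nat \<Rightarrow> 'm \<Rightarrow> 'm"
  inflow :: "nat \<Rightarrow> nat \<Rightarrow> 'm"

definition flow_graph :: "('m::comm_monoid_add) fgraph \<Rightarrow> bool" where
  "flow_graph h \<longleftrightarrow> finite (nodes h) \<and>
     (\<forall>x\<in>nodes h. \<forall>y. continuousM (edge h x y))"

definition in_node :: "('m::comm_monoid_add) fgraph \<Rightarrow> nat \<Rightarrow> 'm" where
  "in_node h x = infsumM (\<lambda>y. inflow h y x) (- nodes h)"

definition is_flow_sol :: "('m::comm_monoid_add) fgraph \<Rightarrow> (nat \<Rightarrow> 'm) \<Rightarrow> bool" where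
  "is_flow_sol h fl \<longleftrightarrow> (\<forall>x\<in>nodes h.
      fl x = in_node h x + (\<Sum>y\<in>nodes h. edge h y x (fl y)))"

definition is_least_flow :: "('m::comm_monoid_add) fgraph \<Rightarrow> (nat \<Rightarrow> 'm) \<Rightarrow> bool" where
  "is_least_flow h fl \<longleftrightarrow> is_flow_sol h fl \<and> (\<forall>x. x \<notin> nodes h \<longrightarrow> fl x = 0) \<and>
     (\<forall>fl'. is_flow_sol h fl' \<longrightarrow> (\<forall>x\<in>nodes h. leM (fl x) (fl' x)))"

definition flow :: "('m::comm_monoid_add) fgraph \<Rightarrow> nat \<Rightarrow> 'm" where
  "flow h = (THE fl. is_least_flow h fl)"

definition outflow :: "('m::comm_monoid_add) fgraph \<Rightarrow> nat \<Rightarrow> nat \<Rightarrow> 'm" where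
  "outflow h x y = edge h x y (flow h x)"

definition compatible :: "('m::comm_monoid_add) fgraph \<Rightarrow> 'm fgraph \<Rightarrow> bool" (infix "##" 50) where
  "h1 ## h2 \<longleftrightarrow> nodes h1 \<inter> nodes h2 = {} \<and>
     (\<forall>x\<in>nodes h1. \<forall>y\<in>nodes h2. outflow h1 x y = inflow h2 x y \<and> outflow h2 y x = inflow h1 y x)"

definition fg_union :: "('m::comm_monoid_add) fgraph \<Rightarrow> 'm fgraph \<Rightarrow> 'm fgraph" (infixl "\<uplus>\<^sub>f" 65) where
  "h1 \<uplus>\<^sub>f h2 = \<lparr> nodes = nodes h1 \<union> nodes h2,
     edge = (\<lambda>x y. if x \<in> nodes h1 then edge h1 x y else edge h2 x y),
     inflow = (\<lambda>y x. if y \<notin> nodes h1 \<union> nodes h2 \<and> x \<in> nodes h1 then inflow h1 y x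
                     else if y \<notin> nodes h1 \<union> nodes h2 \<and> x \<in> nodes h2 then inflow h2 y x
                     else 0) \<rparr>"

definition fun_union :: "nat set \<Rightarrow> (nat \<Rightarrow> 'm) \<Rightarrow> (nat \<Rightarrow> 'm) \<Rightarrow> nat \<Rightarrow> 'm" where
  "fun_union X1 f1 f2 = (\<lambda>x. if x \<in> X1 then f1 x else f2 x)"

end

theory Submission
  imports Defs
begin

lemma leM_refl: "leM a a" unfolding leM_def by (rule exI[of _ 0]) simp

lemma leM_trans[trans]: "leM a b \<Longrightarrow> leM b c \<Longrightarrow> leM a c"
  unfolding leM_def by (metis add.assoc)

lemma leM_0: "leM 0 a" unfolding leM_def by simp

lemma leM_antisym: "flow_monoid TYPE('m::comm_monoid_add) \<Longrightarrow> leM (a::'m) b \<Longrightarrow> leM b a \<Longrightarrow> a = b"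
  unfolding flow_monoid_def by blast

lemma leM_add: "leM a b \<Longrightarrow> leM c d \<Longrightarrow> leM (a+c) (b+(d::'m::comm_monoid_add))"
  unfolding leM_def by (metis add.assoc add.commute)

lemma lub_unique:
  assumes FM: "flow_monoid TYPE('m::comm_monoid_add)" and "is_lubM K (u::'m)"
  shows "lubM K = u"
  unfolding lubM_def
proof (rule the_equality)
  show "is_lubM K u" by fact
  fix v assume "is_lubM K v"
  then show "v = u" using assms leM_antisym[OF FM] unfolding is_lubM_def by blast
qed

lemma chain_lub:
  assumes FM: "flow_monoid TYPE('m::comm_monoid_add)" and "chainM (K::'m set)"
  shows "is_lubM K (lubM K)"
proof -
  obtain u where "is_lubM K u" using assms unfolding flow_monoid_def by blast
  then show ?thesis using lub_unique[OF FM] by simp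
qed

definition asc :: "(nat \<Rightarrow> 'm::comm_monoid_add) \<Rightarrow> bool" where
  "asc s \<longleftrightarrow> (\<forall>n. leM (s n) (s (Suc n)))"

lemma asc_mono: assumes "asc s" "m \<le> n" shows "leM (s m) (s n)"
  using assms(2)
proof (induction n rule: dec_induct)
  case base then show ?case by (rule leM_refl)
next
  case (step n) then show ?case using assms(1) leM_trans unfolding asc_def by blast
qed

lemma asc_chain: assumes "asc s" shows "chainM (range s)"
  unfolding chainM_def
proof (intro conjI ballI)
  show "range s \<noteq> {}" by simp
next
  fix a b assume "a \<in> range s" "b \<in> range s"
  then obtain m n where "a = s m" "b = s n" by auto
  then show "leM a b \<or> leM b a"
    using asc_mono[OF assms] by (cases "m \<le> n") auto
qed

lemma asc_lub:
  assumes FM: "flow_monoid TYPE('m::comm_monoid_add)" and "asc (s::nat \<Rightarrow> 'm)"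
  shows "is_lubM (range s) (lubM (range s))"
  using chain_lub[OF FM asc_chain[OF assms(2)]] .

lemma asc_ub:
  assumes FM: "flow_monoid TYPE('m::comm_monoid_add)" and "asc (s::nat \<Rightarrow> 'm)"
  shows "leM (s n) (lubM (range s))"
  using asc_lub[OF assms] unfolding is_lubM_def by blast

lemma asc_least:
  assumes FM: "flow_monoid TYPE('m::comm_monoid_add)" and "asc (s::nat \<Rightarrow> 'm)"
    and "\<And>n. leM (s n) v"
  shows "leM (lubM (range s)) v"
  using asc_lub[OF FM assms(2)] assms(3) unfolding is_lubM_def by blast

lemma asc_add: "asc a \<Longrightarrow> asc b \<Longrightarrow> asc (\<lambda>n. a n + b n)"
  unfolding asc_def using leM_add by blast

lemma lub_add:
  assumes FM: "flow_monoid TYPE('m::comm_monoid_add)" and a: "asc (a::nat \<Rightarrow> 'm)" and b: "asc b"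
  shows "lubM (range (\<lambda>n. a n + b n)) = lubM (range a) + lubM (range b)"
proof (rule lub_unique[OF FM])
  define A where "A = lubM (range a)"
  define B where "B = lubM (range b)"
  have law: "\<And>(c::'m) K. chainM K \<Longrightarrow> c + lubM K = lubM ((\<lambda>k. c + k) ` K)"
    using FM unfolding flow_monoid_def by blast
  show "is_lubM (range (\<lambda>n. a n + b n)) (lubM (range a) + lubM (range b))"
    unfolding is_lubM_def
  proof safe
    fix n show "leM (a n + b n) (lubM (range a) + lubM (range b))"
      by (rule leM_add; rule asc_ub[OF FM]; fact)
  next
    fix v assume v: "\<forall>k\<in>range (\<lambda>n. a n + b n). leM k v"
    have 1: "leM (b m + A) v" for m
    proof -
      have ch: "asc (\<lambda>n. b m + a n)" using asc_add[of "\<lambda>_. b m" a] a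
        unfolding asc_def by (simp add: leM_refl)
      have "b m + A = lubM (range (\<lambda>n. b m + a n))"
        unfolding A_def using law[OF asc_chain[OF a], of "b m"] by (simp add: image_image)
      also have "leM \<dots> v"
      proof (rule asc_least[OF FM ch])
        fix n
        have "leM (b m + a n) (b (max m n) + a (max m n))"
          by (rule leM_add; rule asc_mono; (fact | simp))
        also have "leM \<dots> v" using v by (auto simp: add.commute)
        finally show "leM (b m + a n) v" .
      qed
      finally show ?thesis .
    qed
    have ch2: "asc (\<lambda>n. A + b n)" using asc_add[of "\<lambda>_. A" b] b
        unfolding asc_def by (simp add: leM_refl)
    have "A + B = lubM (range (\<lambda>n. A + b n))"
      unfolding B_def using law[OF asc_chain[OF b], of A] by (simp add: image_image)
    also have "leM \<dots> v"
      by (rule asc_least[OF FM ch2]) (use 1 in \<open>simp add: add.commute\<close>)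
    finally show "leM (lubM (range a) + lubM (range b)) v" unfolding A_def B_def .
  qed
qed

lemma lub_const:
  assumes FM: "flow_monoid TYPE('m::comm_monoid_add)"
  shows "lubM (range (\<lambda>n. c::'m)) = c"
  by (rule lub_unique[OF FM]) (auto simp: is_lubM_def leM_refl)

lemma asc_sum: "finite S \<Longrightarrow> (\<forall>y\<in>S. asc (f y)) \<Longrightarrow> asc (\<lambda>n. \<Sum>y\<in>S. f y n)"
proof (induction S rule: finite_induct)
  case empty then show ?case by (simp add: asc_def leM_refl)
next
  case (insert x F) then show ?case using asc_add[of "f x" "\<lambda>n. \<Sum>y\<in>F. f y n"] by simp
qed

lemma lub_sum:
  assumes FM: "flow_monoid TYPE('m::comm_monoid_add)"
  shows "finite S \<Longrightarrow> (\<forall>y\<in>S. asc (f y)) \<Longrightarrow>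
    lubM (range (\<lambda>n. \<Sum>y\<in>S. (f y n::'m))) = (\<Sum>y\<in>S. lubM (range (f y)))"
proof (induction S rule: finite_induct)
  case empty then show ?case using lub_const[OF FM, of 0] by simp
next
  case (insert x F)
  then show ?case
    using lub_add[OF FM, of "f x" "\<lambda>n. \<Sum>y\<in>F. f y n"] asc_sum[of F f] by simp
qed

lemma cont_mono:
  assumes FM: "flow_monoid TYPE('m::comm_monoid_add)" and c: "continuousM f" and ab: "leM (a::'m) b"
  shows "leM (f a) (f b)"
proof -
  have ch: "chainM {a, b}" unfolding chainM_def using ab leM_refl by auto
  have "lubM {a,b} = b"
    by (rule lub_unique[OF FM]) (auto simp: is_lubM_def ab leM_refl)
  then have "is_lubM {f a, f b} (f b)" using c ch unfolding continuousM_def by force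
  then show ?thesis unfolding is_lubM_def by blast
qed

lemma asc_map:
  assumes FM: "flow_monoid TYPE('m::comm_monoid_add)" and "continuousM f" "asc (s::nat\<Rightarrow>'m)"
  shows "asc (\<lambda>n. f (s n))"
  using assms cont_mono[OF FM] unfolding asc_def by blast

lemma cont_lub:
  assumes FM: "flow_monoid TYPE('m::comm_monoid_add)" and c: "continuousM f" and s: "asc (s::nat\<Rightarrow>'m)"
  shows "f (lubM (range s)) = lubM (range (\<lambda>n. f (s n)))"
proof -
  have "is_lubM (f ` range s) (f (lubM (range s)))"
    using c asc_chain[OF s] unfolding continuousM_def by blast
  then have "lubM (f ` range s) = f (lubM (range s))" by (rule lub_unique[OF FM])
  then show ?thesis by (simp add: image_image)
qed

lemma lub_eventually:
  assumes FM: "flow_monoid TYPE('m::comm_monoid_add)" and s: "asc (s::nat\<Rightarrow>'m)"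
    and ev: "\<And>n. n \<ge> N \<Longrightarrow> s n = c"
  shows "lubM (range s) = c"
proof (rule lub_unique[OF FM])
  show "is_lubM (range s) c" unfolding is_lubM_def
  proof safe
    fix n show "leM (s n) c"
    proof (cases "n \<le> N")
      case True then show ?thesis using asc_mono[OF s True] ev[of N] by simp
    next
      case False then show ?thesis using ev[of n] leM_refl by simp
    qed
  next
    fix v assume "\<forall>k\<in>range s. leM k v"
    then show "leM c v" using ev[of N] by auto
  qed
qed

lemma lub_shift:
  assumes FM: "flow_monoid TYPE('m::comm_monoid_add)" and s: "asc (s::nat\<Rightarrow>'m)"
  shows "lubM (range (\<lambda>n. s (Suc n))) = lubM (range s)"
proof (rule lub_unique[OF FM])
  show "is_lubM (range (\<lambda>n. s (Suc n))) (lubM (range s))" unfolding is_lubM_def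
  proof safe
    fix n show "leM (s (Suc n)) (lubM (range s))" by (rule asc_ub[OF FM s])
  next
    fix v assume v: "\<forall>k\<in>range (\<lambda>n. s (Suc n)). leM k v"
    show "leM (lubM (range s)) v"
    proof (rule asc_least[OF FM s])
      fix n show "leM (s n) v" using v s leM_trans unfolding asc_def by blast
    qed
  qed
qed

section \<open>Existence of least flows\<close>

definition Fop :: "('m::comm_monoid_add) fgraph \<Rightarrow> (nat \<Rightarrow> 'm) \<Rightarrow> nat \<Rightarrow> 'm" where
  "Fop h fl = (\<lambda>x. if x \<in> nodes h then in_node h x + (\<Sum>y\<in>nodes h. edge h y x (fl y)) else 0)"

lemma Fop_mono:
  assumes FM: "flow_monoid TYPE('m::comm_monoid_add)" and g: "flow_graph (h::'m fgraph)"
    and le: "\<forall>y\<in>nodes h. leM (f1 y) (f2 y)"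
  shows "leM (Fop h f1 x) (Fop h f2 x)"
proof (cases "x \<in> nodes h")
  case True
  have "leM (\<Sum>y\<in>S. edge h y x (f1 y)) (\<Sum>y\<in>S. edge h y x (f2 y))" if "S \<subseteq> nodes h" for S
  proof -
    have "finite S" using g that finite_subset unfolding flow_graph_def by blast
    then show ?thesis using that
    proof (induction S rule: finite_induct)
      case empty then show ?case by (simp add: leM_refl)
    next
      case (insert a F)
      have "leM (edge h a x (f1 a)) (edge h a x (f2 a))"
        using insert.prems le g cont_mono[OF FM] unfolding flow_graph_def by blast
      then show ?case using insert leM_add by simp
    qed
  qed
  then show ?thesis using True unfolding Fop_def by (simp add: leM_add leM_refl)
next
  case False then show ?thesis unfolding Fop_def by (simp add: leM_refl)
qed

lemma least_flow_exists:
  assumes FM: "flow_monoid TYPE('m::comm_monoid_add)" and g: "flow_graph (h::'m fgraph)"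
  shows "\<exists>fl. is_least_flow h fl"
proof -
  define s where "s n = (Fop h ^^ n) (\<lambda>_. 0)" for n
  have sS: "s (Suc n) = Fop h (s n)" for n unfolding s_def by simp
  have fin: "finite (nodes h)" using g unfolding flow_graph_def by blast
  have cont: "\<And>y x. y \<in> nodes h \<Longrightarrow> continuousM (edge h y x)" using g unfolding flow_graph_def by blast
  have ascx: "asc (\<lambda>n. s n x)" for x
  proof -
    have "\<forall>x. leM (s n x) (s (Suc n) x)" for n
    proof (induction n)
      case 0 then show ?case by (simp add: s_def leM_0)
    next
      case (Suc n) then show ?case using Fop_mono[OF FM g] sS by metis
    qed
    then show ?thesis unfolding asc_def by blast
  qed
  define L where "L x = lubM (range (\<lambda>n. s n x))" for x
  have out: "L x = 0" if "x \<notin> nodes h" for x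
  proof -
    have "s n x = 0" for n by (cases n) (simp_all add: s_def Fop_def that)
    then show ?thesis unfolding L_def using lub_const[OF FM, of 0] by simp
  qed
  have sol: "is_flow_sol h L" unfolding is_flow_sol_def
  proof
    fix x assume x: "x \<in> nodes h"
    have e: "edge h y x (L y) = lubM (range (\<lambda>n. edge h y x (s n y)))" if "y \<in> nodes h" for y
      unfolding L_def by (rule cont_lub[OF FM cont[OF that] ascx])
    have ae: "\<forall>y\<in>nodes h. asc (\<lambda>n. edge h y x (s n y))"
      using asc_map[OF FM cont ascx] by blast
    have "in_node h x + (\<Sum>y\<in>nodes h. edge h y x (L y))
        = in_node h x + lubM (range (\<lambda>n. \<Sum>y\<in>nodes h. edge h y x (s n y)))"
      using lub_sum[OF FM fin ae] e by simp
    also have "\<dots> = lubM (range (\<lambda>n. in_node h x + (\<Sum>y\<in>nodes h. edge h y x (s n y))))"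
      using lub_add[OF FM, of "\<lambda>_. in_node h x" "\<lambda>n. \<Sum>y\<in>nodes h. edge h y x (s n y)"]
        asc_sum[OF fin ae] lub_const[OF FM] by (simp add: asc_def leM_refl)
    also have "\<dots> = lubM (range (\<lambda>n. s (Suc n) x))"
      using x by (simp add: sS Fop_def)
    also have "\<dots> = L x" unfolding L_def by (rule lub_shift[OF FM ascx])
    finally show "L x = in_node h x + (\<Sum>y\<in>nodes h. edge h y x (L y))" by simp
  qed
  have least: "\<forall>x\<in>nodes h. leM (L x) (fl' x)" if fl': "is_flow_sol h fl'" for fl'
  proof -
    have "\<forall>x\<in>nodes h. leM (s n x) (fl' x)" for n
    proof (induction n)
      case 0 then show ?case by (simp add: s_def leM_0)
    next
      case (Suc n)
      show ?case
      proof
        fix x assume x: "x \<in> nodes h"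
        have "leM (Fop h (s n) x) (Fop h fl' x)" by (rule Fop_mono[OF FM g Suc])
        also have "Fop h fl' x = fl' x" using fl' x unfolding is_flow_sol_def Fop_def by simp
        finally show "leM (s (Suc n) x) (fl' x)" by (simp add: sS)
      qed
    qed
    then show ?thesis unfolding L_def using asc_least[OF FM ascx] by blast
  qed
  show ?thesis using sol out least unfolding is_least_flow_def by blast
qed

lemma flow_least:
  assumes FM: "flow_monoid TYPE('m::comm_monoid_add)" and g: "flow_graph (h::'m fgraph)"
  shows "is_least_flow h (flow h)"
proof -
  obtain fl where fl: "is_least_flow h fl" using least_flow_exists[OF FM g] by blast
  have "flow h = fl" unfolding flow_def
  proof (rule the_equality)
    show "is_least_flow h fl" by fact
    fix f assume f: "is_least_flow h f"
    show "f = fl"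
    proof
      fix x show "f x = fl x"
        using f fl leM_antisym[OF FM] unfolding is_least_flow_def by (cases "x \<in> nodes h") auto
    qed
  qed
  then show ?thesis using fl by simp
qed

section \<open>Infinite sums\<close>

lemma asc_partial: "asc (\<lambda>n. sum g (A \<inter> {..<n}))"
  unfolding asc_def
proof
  fix n
  show "leM (sum g (A \<inter> {..<n})) (sum g (A \<inter> {..<Suc n}))"
  proof (cases "n \<in> A")
    case True
    have "A \<inter> {..<Suc n} = insert n (A \<inter> {..<n})" using True by auto
    then show ?thesis unfolding leM_def by (auto simp: add.commute)
  next
    case False
    have "A \<inter> {..<Suc n} = A \<inter> {..<n}" using False by (auto simp: less_Suc_eq)
    then show ?thesis by (simp add: leM_refl)
  qed
qed

lemma infsum_split:
  assumes FM: "flow_monoid TYPE('m::comm_monoid_add)" and B: "finite B" "B \<subseteq> A"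
  shows "infsumM (g::nat \<Rightarrow> 'm) A = infsumM g (A - B) + sum g B"
proof -
  have eq: "sum g (A \<inter> {..<n}) = sum g ((A - B) \<inter> {..<n}) + sum g (B \<inter> {..<n})" for n
  proof -
    have "A \<inter> {..<n} = ((A - B) \<inter> {..<n}) \<union> (B \<inter> {..<n})" using B by auto
    then show ?thesis by (simp add: sum.union_disjoint[symmetric] Int_Un_distrib2 Diff_Int_distrib2) (metis Diff_disjoint Int_Diff Int_commute finite_Int finite_lessThan inf_commute sum.union_disjoint Un_Diff_cancel2 Int_Un_distrib2 inf.idem)
  qed
  obtain N where N: "\<forall>b\<in>B. b < N" using B(1) by (metis finite_nat_set_iff_bounded)
  have Bc: "lubM (range (\<lambda>n. sum g (B \<inter> {..<n}))) = sum g B"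
  proof (rule lub_eventually[OF FM asc_partial, of N])
    fix n assume "N \<le> n"
    then have "B \<inter> {..<n} = B" using N by auto
    then show "sum g (B \<inter> {..<n}) = sum g B" by simp
  qed
  show ?thesis unfolding infsumM_def eq
    using lub_add[OF FM asc_partial asc_partial] Bc by simp
qed

lemma infsum_cong: "(\<And>y. y \<in> A \<Longrightarrow> g y = g' y) \<Longrightarrow> infsumM g A = infsumM g' A"
  unfolding infsumM_def by (metis (no_types, lifting) IntD1 sum.cong)

theorem mainTheorem3:
  fixes h1 h2 :: "('m::comm_monoid_add) fgraph"
  assumes "flow_monoid TYPE('m)"
    and "flow_graph h1" and "flow_graph h2"
    and "h1 ## h2"
  shows "\<forall>x\<in>nodes h1 \<union> nodes h2.
           leM (flow (h1 \<uplus>\<^sub>f h2) x) (fun_union (nodes h1) (flow h1) (flow h2) x)"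
proof -
  note FM = assms(1)
  define X1 where "X1 = nodes h1"
  define X2 where "X2 = nodes h2"
  define h where "h = h1 \<uplus>\<^sub>f h2"
  define fl where "fl = fun_union (nodes h1) (flow h1) (flow h2)"
  have disj: "X1 \<inter> X2 = {}" using assms(4) unfolding compatible_def X1_def X2_def by blast
  have comp1: "\<And>x y. x \<in> X1 \<Longrightarrow> y \<in> X2 \<Longrightarrow> outflow h1 x y = inflow h2 x y"
   and comp2: "\<And>x y. x \<in> X1 \<Longrightarrow> y \<in> X2 \<Longrightarrow> outflow h2 y x = inflow h1 y x"
    using assms(4) unfolding compatible_def X1_def X2_def by blast+
  have fin1: "finite X1" and fin2: "finite X2"
    using assms(2,3) unfolding flow_graph_def X1_def X2_def by blast+
  have nh: "nodes h = X1 \<union> X2" unfolding h_def fg_union_def X1_def X2_def by simp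
  have eh: "edge h y x = (if y \<in> X1 then edge h1 y x else edge h2 y x)" for x y
    unfolding h_def fg_union_def X1_def by simp
  have ih: "inflow h y x = (if y \<notin> X1 \<union> X2 \<and> x \<in> X1 then inflow h1 y x
                     else if y \<notin> X1 \<union> X2 \<and> x \<in> X2 then inflow h2 y x else 0)" for x y
    unfolding h_def fg_union_def X1_def X2_def by simp
  have gh: "flow_graph h"
    unfolding flow_graph_def
  proof (intro conjI ballI allI)
    show "finite (nodes h)" using fin1 fin2 nh by simp
  next
    fix x y assume "x \<in> nodes h"
    then show "continuousM (edge h x y)" using assms(2,3) nh eh
      unfolding flow_graph_def X1_def X2_def by auto
  qed
  have L1: "is_least_flow h1 (flow h1)" by (rule flow_least[OF FM assms(2)])
  have L2: "is_least_flow h2 (flow h2)" by (rule flow_least[OF FM assms(3)])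
  have Lh: "is_least_flow h (flow h)" by (rule flow_least[OF FM gh])
  have sol: "is_flow_sol h fl" unfolding is_flow_sol_def
  proof
    fix x assume "x \<in> nodes h"
    then have x: "x \<in> X1 \<union> X2" using nh by simp
    have sumsplit: "(\<Sum>y\<in>nodes h. edge h y x (fl y))
        = (\<Sum>y\<in>X1. edge h1 y x (flow h1 y)) + (\<Sum>y\<in>X2. edge h2 y x (flow h2 y))"
    proof -
      have "(\<Sum>y\<in>nodes h. edge h y x (fl y)) = (\<Sum>y\<in>X1. edge h y x (fl y)) + (\<Sum>y\<in>X2. edge h y x (fl y))"
        unfolding nh using sum.union_disjoint[OF fin1 fin2 disj] by simp
      moreover have "(\<Sum>y\<in>X1. edge h y x (fl y)) = (\<Sum>y\<in>X1. edge h1 y x (flow h1 y))"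
        by (rule sum.cong) (auto simp: eh fl_def fun_union_def X1_def)
      moreover have "(\<Sum>y\<in>X2. edge h y x (fl y)) = (\<Sum>y\<in>X2. edge h2 y x (flow h2 y))"
        by (rule sum.cong) (use disj in \<open>auto simp: eh fl_def fun_union_def X1_def\<close>)
      ultimately show ?thesis by simp
    qed
    show "fl x = in_node h x + (\<Sum>y\<in>nodes h. edge h y x (fl y))"
    proof (cases "x \<in> X1")
      case True
      have s2: "(\<Sum>y\<in>X2. edge h2 y x (flow h2 y)) = (\<Sum>y\<in>X2. inflow h1 y x)"
        by (rule sum.cong) (use comp2 True in \<open>auto simp: outflow_def\<close>)
      have "in_node h1 x = infsumM (\<lambda>y. inflow h1 y x) (- X1 - X2) + (\<Sum>y\<in>X2. inflow h1 y x)"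
        unfolding in_node_def X1_def[symmetric]
        by (rule infsum_split[OF FM fin2]) (use disj in auto)
      moreover have "infsumM (\<lambda>y. inflow h1 y x) (- X1 - X2) = in_node h x"
        unfolding in_node_def nh Compl_Un[symmetric] Diff_eq
        by (rule infsum_cong) (use True in \<open>auto simp: ih\<close>)
      moreover have "fl x = in_node h1 x + (\<Sum>y\<in>X1. edge h1 y x (flow h1 y))"
        using L1 True unfolding is_least_flow_def is_flow_sol_def fl_def fun_union_def X1_def by simp
      ultimately show ?thesis using sumsplit s2 by (simp add: ac_simps)
    next
      case False
      then have x2: "x \<in> X2" using x by simp
      have s1: "(\<Sum>y\<in>X1. edge h1 y x (flow h1 y)) = (\<Sum>y\<in>X1. inflow h2 y x)"
        by (rule sum.cong) (use comp1 x2 in \<open>auto simp: outflow_def\<close>)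
      have "in_node h2 x = infsumM (\<lambda>y. inflow h2 y x) (- X2 - X1) + (\<Sum>y\<in>X1. inflow h2 y x)"
        unfolding in_node_def X2_def[symmetric]
        by (rule infsum_split[OF FM fin1]) (use disj in auto)
      moreover have "infsumM (\<lambda>y. inflow h2 y x) (- X2 - X1) = in_node h x"
        unfolding in_node_def nh Diff_eq Compl_Un Int_commute[of "- X2"]
        by (rule infsum_cong) (use False x2 in \<open>auto simp: ih\<close>)
      moreover have "fl x = in_node h2 x + (\<Sum>y\<in>X2. edge h2 y x (flow h2 y))"
        using L2 x2 False unfolding is_least_flow_def is_flow_sol_def fl_def fun_union_def X1_def X2_def by simp
      ultimately show ?thesis using sumsplit s1 by (simp add: ac_simps)
    qed
  qed
  then show ?thesis using Lh nh unfolding is_least_flow_def h_def fl_def X1_def X2_def by blast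
qed

end
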